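(* Let $\mathbb T=\mathbb R/2\pi\mathbb Z$ with normalized Lebesgue measure $dx$, $(B_t)$ a one-dimensional Brownian motion, $(t,x)\mapsto\phi_t(x)$ smooth on $[0,1]\times\mathbb T$, $X_t$ the stochastic flow of diffeomorphisms solving the Stratonovich SDE $dX_t=\partial_x\phi_t(X_t)\circ dB_t$, $X_0(x)=x$, $\rho$ a smooth strictly positive probability density and $\rho_t$ the density of $(X_t)_\#(\rho\,dx)$. Set $\hat\rho_t=1/\big((\int_{\mathbb T}\frac{dx}{\rho_t})\rho_t\big)$, $a_t=\frac{\partial_x^2\phi_t}{\rho_t}(X_t)$, $b_t=\frac{\partial_x(\partial_x^2\phi_t\,\partial_x\phi_t)}{\rho_t}(X_t)$ and, for $f\in L^2(\rho\,dx)$, $$\Lambda(t,f)=-\Big(\int_{\mathbb T}fa_t\rho\,dx\Big)\hat\rho_t(X_t),$$ $$\Theta(t,f)=-\frac12\Big(\int_{\mathbb T}fa_t\rho\,dx\Big)(\hat\rho_t\partial_x^2\phi_t)(X_t)-\frac12\Big(\int_{\mathbb T}fb_t\rho\,dx\Big)\hat\rho_t(X_t)+\frac32\Big(\int_{\mathbb T}fa_t\rho\,dx\Big)\Big(\int_{\mathbb T}\partial_x^2\phi_t\,\hat\rho_t\,dx\Big)\hat\rho_t(X_t).$$ Then for all $t\in[0,1]$ and $f\in L^2(\rho\,dx)$, $$\|\Lambda(t,f)\|_{L^2(\rho dx)}\le\Big(\sup_{t\in[0,1]}\|\partial_x^2\phi_t\|_\infty\Big)\|f\|_{L^2(\rho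 dx)},$$ $$\|\Theta(t,f)\|_{L^2(\rho dx)}\le\Big(2\sup_{t\in[0,1]}\|\partial_x^2\phi_t\|_\infty^2+\sup_{t\in[0,1]}\|\partial_x(\partial_x^2\phi_t\,\partial_x\phi_t)\|_\infty\Big)\|f\|_{L^2(\rho dx)}.$$ *)

theory Defs
  imports "HOL-Analysis.Analysis"
begin

text \<open>The circle T = R/2piZ is modelled by 2pi-periodic functions on the real line.
  Normalized Lebesgue measure dx on T: integral over [0,2pi] divided by 2pi.\<close>

definition per :: "(real \<Rightarrow> real) \<Rightarrow> bool" where
  "per g \<longleftrightarrow> (\<forall>x. g (x + 2*pi) = g x)"

definition tint :: "(real \<Rightarrow> real) \<Rightarrow> real" where
  "tint g = integral {0..2*pi} g / (2*pi)"

definition smooth_fun :: "(real \<Rightarrow> real) \<Rightarrow> bool" where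
  "smooth_fun g \<longleftrightarrow> (\<forall>n x. ((deriv ^^ n) g) differentiable (at x))"

definition l2norm :: "(real \<Rightarrow> real) \<Rightarrow> (real \<Rightarrow> real) \<Rightarrow> real" where
  "l2norm rho f = sqrt (tint (\<lambda>x. (f x)^2 * rho x))"

definition inL2 :: "(real \<Rightarrow> real) \<Rightarrow> (real \<Rightarrow> real) \<Rightarrow> bool" where
  "inL2 rho f \<longleftrightarrow> f \<in> borel_measurable (lebesgue_on {0..2*pi})
      \<and> (\<lambda>x. (f x)^2 * rho x) integrable_on {0..2*pi}"

definition supn :: "(real \<Rightarrow> real) \<Rightarrow> real" where
  "supn g = (SUP x. \<bar>g x\<bar>)"

definition d1 :: "(real \<Rightarrow> real \<Rightarrow> real) \<Rightarrow> real \<Rightarrow> real \<Rightarrow> real" where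
  "d1 phi t = deriv (phi t)"

definition d2 :: "(real \<Rightarrow> real \<Rightarrow> real) \<Rightarrow> real \<Rightarrow> real \<Rightarrow> real" where
  "d2 phi t = deriv (deriv (phi t))"

definition rhohat :: "(real \<Rightarrow> real \<Rightarrow> real) \<Rightarrow> real \<Rightarrow> real \<Rightarrow> real" where
  "rhohat rhot t y = 1 / (tint (\<lambda>z. 1 / rhot t z) * rhot t y)"

definition acoef where
  "acoef phi X rhot t x = d2 phi t (X t x) / rhot t (X t x)"

definition bcoef where
  "bcoef phi X rhot t x =
     deriv (\<lambda>y. d2 phi t y * d1 phi t y) (X t x) / rhot t (X t x)"

definition Lam where
  "Lam phi X rho rhot t f x =
     - tint (\<lambda>y. f y * acoef phi X rhot t y * rho y) * rhohat rhot t (X t x)"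

definition Theta where
  "Theta phi X rho rhot t f x =
     - 1/2 * tint (\<lambda>y. f y * acoef phi X rhot t y * rho y)
           * (rhohat rhot t (X t x) * d2 phi t (X t x))
     - 1/2 * tint (\<lambda>y. f y * bcoef phi X rhot t y * rho y) * rhohat rhot t (X t x)
     + 3/2 * tint (\<lambda>y. f y * acoef phi X rhot t y * rho y)
           * tint (\<lambda>y. d2 phi t y * rhohat rhot t y) * rhohat rhot t (X t x)"

end

theory Submission
  imports Defs
begin

lemma tint_le: assumes "f integrable_on {0..2*pi}" "g integrable_on {0..2*pi}"
  "\<And>x. x \<in> {0..2*pi} \<Longrightarrow> f x \<le> g x" shows "tint f \<le> tint g"
  unfolding tint_def using integral_le[OF assms] by (simp add: divide_right_mono)

lemma tint_nonneg: assumes "f integrable_on {0..2*pi}"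
  "\<And>x. x \<in> {0..2*pi} \<Longrightarrow> 0 \<le> f x" shows "0 \<le> tint f"
  unfolding tint_def using integral_nonneg[OF assms] by simp

lemma tint_cmul: "tint (\<lambda>x. c * f x) = c * tint f"
  unfolding tint_def by simp

lemma tint_add: "f integrable_on {0..2*pi} \<Longrightarrow> g integrable_on {0..2*pi} \<Longrightarrow>
  tint (\<lambda>x. f x + g x) = tint f + tint g"
  unfolding tint_def by (simp add: integral_add add_divide_distrib)

lemma tint_const: "tint (\<lambda>x. c) = c"
  unfolding tint_def by simp

lemma cont_int: fixes f :: "real \<Rightarrow> real" assumes "continuous_on UNIV f" shows "f integrable_on {0..2*pi}"
  by (rule integrable_continuous_interval[OF continuous_on_subset[OF assms subset_UNIV]])

lemma CS:
  fixes f g rho :: "real \<Rightarrow> real"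
  assumes fm: "f \<in> borel_measurable (lebesgue_on {0..2*pi})"
    and fi: "(\<lambda>x. (f x)^2 * rho x) integrable_on {0..2*pi}"
    and gc: "continuous_on UNIV g" and rc: "continuous_on UNIV rho"
    and rp: "\<And>x. rho x > 0"
  shows "(\<lambda>x. f x * g x * rho x) integrable_on {0..2*pi}"
    and "\<bar>tint (\<lambda>x. f x * g x * rho x)\<bar> \<le> sqrt (tint (\<lambda>x. (f x)^2 * rho x)) * sqrt (tint (\<lambda>x. (g x)^2 * rho x))"
proof -
  have S: "{0..2*pi::real} \<in> sets lebesgue" by simp
  have gi: "(\<lambda>x. (g x)^2 * rho x) integrable_on {0..2*pi}"
    by (rule cont_int) (intro continuous_intros gc rc)
  have gm: "g \<in> borel_measurable (lebesgue_on {0..2*pi})"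
    by (rule continuous_imp_measurable_on_sets_lebesgue[OF gc[THEN continuous_on_subset] S]) auto
  have rm: "rho \<in> borel_measurable (lebesgue_on {0..2*pi})"
    by (rule continuous_imp_measurable_on_sets_lebesgue[OF rc[THEN continuous_on_subset] S]) auto
  show fgi: "(\<lambda>x. f x * g x * rho x) integrable_on {0..2*pi}"
  proof (rule measurable_bounded_by_integrable_imp_integrable[OF _ integrable_add[OF fi gi] _ S])
    show "(\<lambda>x. f x * g x * rho x) \<in> borel_measurable (lebesgue_on {0..2*pi})"
      by (rule borel_measurable_times[OF borel_measurable_times[OF fm gm] rm])
    fix x
    have "\<bar>f x * g x\<bar> \<le> (f x)^2 + (g x)^2"
    proof -
      have "0 \<le> (\<bar>f x\<bar> - \<bar>g x\<bar>)^2" by simp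
      then have "2 * \<bar>f x\<bar> * \<bar>g x\<bar> \<le> (f x)^2 + (g x)^2" by (simp add: power2_diff abs_mult)
      moreover have "0 \<le> \<bar>f x\<bar> * \<bar>g x\<bar>" by simp
      ultimately show ?thesis unfolding abs_mult by linarith
    qed
    then have "\<bar>f x * g x\<bar> * rho x \<le> ((f x)^2 + (g x)^2) * rho x"
      using rp[of x] by (intro mult_right_mono) auto
    then show "norm (f x * g x * rho x) \<le> (f x)^2 * rho x + (g x)^2 * rho x"
      using rp[of x] by (simp add: abs_mult distrib_right)
  qed
  define A where "A = tint (\<lambda>x. (f x)^2 * rho x)"
  define B where "B = tint (\<lambda>x. (g x)^2 * rho x)"
  define I where "I = tint (\<lambda>x. f x * g x * rho x)"
  have quad: "0 \<le> s^2 * A + 2 * s * I + B" for s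
  proof -
    have eq: "(\<lambda>x. (s * f x + g x)^2 * rho x) = (\<lambda>x. (s^2 * ((f x)^2 * rho x) + (2 * s) * (f x * g x * rho x)) + (g x)^2 * rho x)"
      by (simp add: fun_eq_iff power2_eq_square algebra_simps)
    have i1: "(\<lambda>x. s^2 * ((f x)^2 * rho x)) integrable_on {0..2*pi}"
      using integrable_cmul[OF fi, of "s^2"] by simp
    have i2: "(\<lambda>x. (2 * s) * (f x * g x * rho x)) integrable_on {0..2*pi}"
      using integrable_cmul[OF fgi, of "2 * s"] by simp
    have "0 \<le> tint (\<lambda>x. (s * f x + g x)^2 * rho x)"
      unfolding tint_def
    proof (intro divide_nonneg_pos integral_nonneg)
      show "(\<lambda>x. (s * f x + g x)^2 * rho x) integrable_on {0..2*pi}"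
        unfolding eq by (intro integrable_add i1 i2 gi)
      fix x show "0 \<le> (s * f x + g x)^2 * rho x" using rp[of x] by simp
    qed simp
    also have "\<dots> = s^2 * A + 2 * s * I + B"
      unfolding eq A_def B_def I_def
      by (simp add: tint_add[OF integrable_add[OF i1 i2] gi] tint_add[OF i1 i2] tint_cmul)
    finally show ?thesis .
  qed
  have A0: "0 \<le> A" unfolding A_def by (intro tint_nonneg fi) (simp add: less_imp_le[OF rp])
  have B0: "0 \<le> B" unfolding B_def by (intro tint_nonneg gi) (simp add: less_imp_le[OF rp])
  have "I^2 \<le> A * B"
  proof (cases "A = 0")
    case True
    show ?thesis
    proof (rule ccontr)
      assume "\<not> ?thesis"
      then have "I \<noteq> 0" using True by auto
      have e: "2 * (- (B + 1) / (2 * I)) * I = - (B + 1)" using \<open>I \<noteq> 0\<close> by simp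
      show False using quad[of "- (B + 1) / (2 * I)"] True unfolding e by simp
    qed
  next
    case False
    then have "A > 0" using A0 by auto
    have "(-I/A)^2 * A + 2 * (-I/A) * I + B = B - I^2 / A" using \<open>A > 0\<close> by (simp add: power2_eq_square field_simps)
    then have "I^2 / A \<le> B" using quad[of "-I/A"] by simp
    then show ?thesis using \<open>A > 0\<close> by (simp add: divide_le_eq mult.commute)
  qed
  then have "sqrt (I^2) \<le> sqrt (A * B)" by (rule real_sqrt_le_mono)
  then show "\<bar>I\<bar> \<le> sqrt A * sqrt B" using A0 by (simp add: real_sqrt_mult)
qed

lemma per_deriv: assumes "per g" shows "per (deriv g)"
  unfolding per_def
proof
  fix x
  have g: "(\<lambda>x. g (x + 2*pi)) = g" using assms by (simp add: per_def fun_eq_iff)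
  have "\<And>D. (g has_field_derivative D) (at (x + 2*pi)) = (g has_field_derivative D) (at x)"
    using DERIV_shift[of g _ x "2*pi"] g by simp
  then show "deriv g (x + 2*pi) = deriv g x" unfolding deriv_def by simp
qed

lemma per_nat: assumes "per g" shows "g (x + real n * (2*pi)) = g x"
proof (induction n)
  case (Suc n)
  have "g (x + real (Suc n) * (2*pi)) = g ((x + real n * (2*pi)) + 2*pi)"
    by (simp add: algebra_simps)
  also have "\<dots> = g (x + real n * (2*pi))" using assms by (simp add: per_def)
  finally show ?case using Suc by simp
qed simp

lemma per_reduce: assumes "per g" shows "\<exists>y\<in>{0..2*pi}. g x = g y"
proof -
  define k where "k = \<lfloor>x / (2*pi)\<rfloor>"
  define y where "y = x - real_of_int k * (2*pi)"
  have k1: "real_of_int k \<le> x / (2*pi)" "x / (2*pi) < real_of_int k + 1"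
    unfolding k_def by linarith+
  have "real_of_int k * (2*pi) \<le> x" using k1(1) by (simp add: field_simps)
  moreover have "x < (real_of_int k + 1) * (2*pi)" using k1(2) by (simp add: field_simps)
  ultimately have y: "y \<in> {0..2*pi}" unfolding y_def by (auto simp: algebra_simps)
  have "g x = g y"
  proof (cases "k \<ge> 0")
    case True
    define n where "n = nat k"
    have n: "k = int n" using True unfolding n_def by simp
    have "g (y + real n * (2*pi)) = g y" by (rule per_nat[OF assms])
    then show ?thesis unfolding y_def n by simp
  next
    case False
    define n where "n = nat (- k)"
    have n: "k = - int n" using False unfolding n_def by simp
    have "g (x + real n * (2*pi)) = g x" by (rule per_nat[OF assms])
    then show ?thesis unfolding y_def n by simp
  qed
  then show ?thesis using y by blast
qed

lemma unif_bound:
  assumes c: "continuous_on ({0..1} \<times> UNIV) (\<lambda>(t, x). F t x)"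
    and p: "\<And>t. t \<in> {0..1::real} \<Longrightarrow> per (F t)"
  shows "\<exists>B. \<forall>t\<in>{0..1}. \<forall>x. \<bar>F t x\<bar> \<le> B"
proof -
  have "compact ((\<lambda>(t, x). F t x) ` ({0..1::real} \<times> {0..2*pi::real}))"
    by (rule compact_continuous_image[OF continuous_on_subset[OF c]]) (auto intro: compact_Times)
  then obtain B where B: "\<forall>z\<in>(\<lambda>(t, x). F t x) ` ({0..1} \<times> {0..2*pi}). norm z \<le> B"
    using compact_imp_bounded bounded_iff by metis
  show ?thesis
  proof (intro exI ballI allI)
    fix t x assume t: "t \<in> {0..1::real}"
    obtain y where y: "y \<in> {0..2*pi}" "F t x = F t y" using per_reduce[OF p[OF t]] by blast
    have "(t, y) \<in> {0..1} \<times> {0..2*pi}" using t y by auto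
    then have "(\<lambda>(t, x). F t x) (t, y) \<in> (\<lambda>(t, x). F t x) ` ({0..1} \<times> {0..2*pi})" by (rule imageI)
    then have "norm ((\<lambda>(t, x). F t x) (t, y)) \<le> B" by (rule B[rule_format])
    then show "\<bar>F t x\<bar> \<le> B" using y by simp
  qed
qed

lemma supn_facts: assumes "\<And>x. \<bar>g x\<bar> \<le> B"
  shows "\<bar>g x\<bar> \<le> supn g" "supn g \<le> B" "0 \<le> supn g"
proof -
  have bdd: "bdd_above ((\<lambda>x. \<bar>g x\<bar>) ` UNIV)" by (rule bdd_aboveI2[where M=B]) (rule assms)
  show 1: "\<bar>g x\<bar> \<le> supn g" for x unfolding supn_def by (rule cSUP_upper[OF _ bdd]) auto
  show "supn g \<le> B" unfolding supn_def by (rule cSUP_least) (auto simp: assms)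
  show "0 \<le> supn g" using 1[of 0] by linarith
qed

lemma smooth_d:
  assumes "smooth_fun p"
  shows "continuous_on UNIV (deriv p)" "continuous_on UNIV (deriv (deriv p))"
    "continuous_on UNIV (deriv (deriv (deriv p)))"
    "deriv (\<lambda>y. deriv (deriv p) y * deriv p y) x
       = deriv (deriv (deriv p)) x * deriv p x + deriv (deriv p) x * deriv (deriv p) x"
proof -
  have sm: "\<And>n x. ((deriv ^^ n) p) differentiable (at x)" using assms unfolding smooth_fun_def by blast
  have d1: "deriv p differentiable (at x)" for x
    using sm[of "Suc 0" x] by simp
  have d2: "deriv (deriv p) differentiable (at x)" for x
    using sm[of "Suc (Suc 0)" x] by simp
  have d3: "deriv (deriv (deriv p)) differentiable (at x)" for x
    using sm[of "Suc (Suc (Suc 0))" x] by simp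
  show "continuous_on UNIV (deriv p)" using d1
    by (intro differentiable_imp_continuous_on) (auto simp: differentiable_on_def)
  show "continuous_on UNIV (deriv (deriv p))" using d2
    by (intro differentiable_imp_continuous_on) (auto simp: differentiable_on_def)
  show "continuous_on UNIV (deriv (deriv (deriv p)))" using d3
    by (intro differentiable_imp_continuous_on) (auto simp: differentiable_on_def)
  have "((\<lambda>y. deriv (deriv p) y * deriv p y) has_field_derivative
      deriv (deriv (deriv p)) x * deriv p x + deriv (deriv p) x * deriv (deriv p) x) (at x)"
    using DERIV_mult[OF d2[of x, unfolded DERIV_deriv_iff_real_differentiable[symmetric]]
                        d1[of x, unfolded DERIV_deriv_iff_real_differentiable[symmetric]]]
    by simp
  then show "deriv (\<lambda>y. deriv (deriv p) y * deriv p y) x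
       = deriv (deriv (deriv p)) x * deriv p x + deriv (deriv p) x * deriv (deriv p) x"
    by (rule DERIV_imp_deriv)
qed

lemma l2_bound:
  assumes Fc: "continuous_on UNIV F" and Rc: "continuous_on UNIV R"
    and rc: "continuous_on UNIV rho" and rp: "\<And>x. rho x > 0"
    and Q: "0 \<le> Q" and FR: "\<And>x. \<bar>F x\<bar> \<le> Q * R x"
  shows "l2norm rho F \<le> Q * sqrt (tint (\<lambda>x. (R x)^2 * rho x))"
proof -
  have "tint (\<lambda>x. (F x)^2 * rho x) \<le> tint (\<lambda>x. Q^2 * ((R x)^2 * rho x))"
  proof (rule tint_le)
    show "(\<lambda>x. (F x)^2 * rho x) integrable_on {0..2*pi}"
      by (rule cont_int) (intro continuous_intros Fc rc)
    show "(\<lambda>x. Q^2 * ((R x)^2 * rho x)) integrable_on {0..2*pi}"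
      by (rule cont_int) (intro continuous_intros Rc rc)
    fix x
    have "\<bar>F x\<bar>^2 \<le> (Q * R x)^2" by (rule power_mono[OF FR]) simp
    then have FQ: "(F x)^2 \<le> Q^2 * (R x)^2" by (simp add: power_mult_distrib)
    show "(F x)^2 * rho x \<le> Q^2 * ((R x)^2 * rho x)"
      using mult_right_mono[OF FQ less_imp_le[OF rp[of x]]] by (simp add: mult.assoc)
  qed
  then have "l2norm rho F \<le> sqrt (Q^2 * tint (\<lambda>x. (R x)^2 * rho x))"
    unfolding l2norm_def tint_cmul by (rule real_sqrt_le_mono)
  also have "\<dots> = Q * sqrt (tint (\<lambda>x. (R x)^2 * rho x))"
    using Q by (simp add: real_sqrt_mult)
  finally show ?thesis .
qed

theorem lemma4p4:
  fixes phi :: "real \<Rightarrow> real \<Rightarrow> real"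
    and X :: "real \<Rightarrow> real \<Rightarrow> real"
    and rho :: "real \<Rightarrow> real"
    and rhot :: "real \<Rightarrow> real \<Rightarrow> real"
  assumes phi_per: "\<And>t. t \<in> {0..1} \<Longrightarrow> per (phi t)"
    and phi_smooth: "\<And>t. t \<in> {0..1} \<Longrightarrow> smooth_fun (phi t)"
    and phi_cont: "\<And>n. continuous_on ({0..1} \<times> UNIV) (\<lambda>(t, x). (deriv ^^ n) (phi t) x)"
    and rho_per: "per rho" and rho_smooth: "smooth_fun rho"
    and rho_pos: "\<And>x. rho x > 0" and rho_prob: "tint rho = 1"
    and X0: "X 0 = id"
    and X_lift: "\<And>t x. t \<in> {0..1} \<Longrightarrow> X t (x + 2*pi) = X t x + 2*pi"
    and X_C1: "\<And>t. t \<in> {0..1} \<Longrightarrow> continuous_on UNIV (deriv (X t))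
                 \<and> (\<forall>x. X t differentiable (at x))"
    and X_deriv_pos: "\<And>t x. t \<in> {0..1} \<Longrightarrow> deriv (X t) x > 0"
    and rhot_per: "\<And>t. t \<in> {0..1} \<Longrightarrow> per (rhot t)"
    and rhot_cont: "\<And>t. t \<in> {0..1} \<Longrightarrow> continuous_on UNIV (rhot t)"
    and rhot_pos: "\<And>t x. t \<in> {0..1} \<Longrightarrow> rhot t x > 0"
    and pushforward: "\<And>t g. t \<in> {0..1} \<Longrightarrow> continuous_on UNIV g \<Longrightarrow> per g \<Longrightarrow>
           tint (\<lambda>y. g y * rhot t y) = tint (\<lambda>x. g (X t x) * rho x)"
  shows "\<forall>t\<in>{0..1}. \<forall>f. inL2 rho f \<longrightarrow>
      l2norm rho (Lam phi X rho rhot t f)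
        \<le> (SUP s\<in>{0..1}. supn (d2 phi s)) * l2norm rho f
    \<and> l2norm rho (Theta phi X rho rhot t f)
        \<le> (2 * (SUP s\<in>{0..1}. (supn (d2 phi s))^2)
            + (SUP s\<in>{0..1}. supn (\<lambda>x. deriv (\<lambda>y. d2 phi s y * d1 phi s y) x)))
          * l2norm rho f"
proof (intro ballI allI impI conjI)
  fix t :: real and f :: "real \<Rightarrow> real"
  assume t: "t \<in> {0..1}" and fL: "inL2 rho f"
  have fm: "f \<in> borel_measurable (lebesgue_on {0..2*pi})"
    and fi: "(\<lambda>x. (f x)^2 * rho x) integrable_on {0..2*pi}" using fL unfolding inL2_def by auto
  have rc: "continuous_on UNIV rho"
  proof -
    have "rho differentiable (at x)" for x
      using rho_smooth unfolding smooth_fun_def by (metis funpow_0)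
    then show ?thesis by (intro differentiable_imp_continuous_on) (auto simp: differentiable_on_def)
  qed
  have rp: "\<And>x. rho x > 0" by (rule rho_pos)
  have per_n: "per ((deriv ^^ n) (phi s))" if "s \<in> {0..1}" for n s
  proof (induction n)
    case 0 then show ?case using phi_per[OF that] by simp
  next
    case (Suc n) then show ?case using per_deriv by simp
  qed
  have ub: "\<exists>B. \<forall>s\<in>{0..1}. \<forall>x. \<bar>(deriv ^^ n) (phi s) x\<bar> \<le> B" for n
    by (rule unif_bound[where F="\<lambda>s. (deriv ^^ n) (phi s)", OF phi_cont per_n])
  obtain B1 where B1x: "\<forall>s\<in>{0..1}. \<forall>x. \<bar>deriv (phi s) x\<bar> \<le> B1"
    using ub[of "Suc 0"] by auto
  have B1: "\<And>s x. s \<in> {0..1} \<Longrightarrow> \<bar>deriv (phi s) x\<bar> \<le> B1" using B1x by blast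
  obtain B2 where B2x: "\<forall>s\<in>{0..1}. \<forall>x. \<bar>deriv (deriv (phi s)) x\<bar> \<le> B2"
    using ub[of "Suc (Suc 0)"] by auto
  have B2: "\<And>s x. s \<in> {0..1} \<Longrightarrow> \<bar>deriv (deriv (phi s)) x\<bar> \<le> B2" using B2x by blast
  obtain B3 where B3x: "\<forall>s\<in>{0..1}. \<forall>x. \<bar>deriv (deriv (deriv (phi s))) x\<bar> \<le> B3"
    using ub[of "Suc (Suc (Suc 0))"] by auto
  have B3: "\<And>s x. s \<in> {0..1} \<Longrightarrow> \<bar>deriv (deriv (deriv (phi s))) x\<bar> \<le> B3" using B3x by blast
  have B1p: "0 \<le> B1" using B1[of 0 0] by simp
  have B2p: "0 \<le> B2" using B2[of 0 0] by simp
  have B3p: "0 \<le> B3" using B3[of 0 0] by simp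
  define bd where "bd s x = deriv (\<lambda>y. d2 phi s y * d1 phi s y) x" for s x
  have bd_fun: "bd s = deriv (\<lambda>y. d2 phi s y * d1 phi s y)" for s by (simp add: fun_eq_iff bd_def)
  have bd_eq: "bd s x = deriv (deriv (deriv (phi s))) x * deriv (phi s) x
      + deriv (deriv (phi s)) x * deriv (deriv (phi s)) x" if "s \<in> {0..1}" for s x
    unfolding bd_def d1_def d2_def by (rule smooth_d(4)[OF phi_smooth[OF that]])
  have bdB: "\<bar>bd s x\<bar> \<le> B3 * B1 + B2 * B2" if s: "s \<in> {0..1}" for s x
  proof -
    have "\<bar>bd s x\<bar> \<le> \<bar>deriv (deriv (deriv (phi s))) x\<bar> * \<bar>deriv (phi s) x\<bar>
      + \<bar>deriv (deriv (phi s)) x\<bar> * \<bar>deriv (deriv (phi s)) x\<bar>"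
      unfolding bd_eq[OF s] abs_mult[symmetric] by (rule abs_triangle_ineq)
    also have "\<dots> \<le> B3 * B1 + B2 * B2"
      by (intro add_mono mult_mono B1 B2 B3 s B1p B2p B3p abs_ge_zero)
    finally show ?thesis .
  qed
  define M where "M s = supn (d2 phi s)" for s
  define N where "N s = supn (bd s)" for s
  have M: "\<bar>d2 phi s x\<bar> \<le> M s" "M s \<le> B2" "0 \<le> M s" if "s \<in> {0..1}" for s x
    unfolding M_def using supn_facts[of "d2 phi s" B2] B2[OF that] by (auto simp: d2_def)
  have N: "\<bar>bd s x\<bar> \<le> N s" "N s \<le> B3 * B1 + B2 * B2" "0 \<le> N s" if "s \<in> {0..1}" for s x
    unfolding N_def using supn_facts[of "bd s" "B3 * B1 + B2 * B2"] bdB[OF that] by auto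
  have SM: "M t \<le> (SUP s\<in>{0..1}. supn (d2 phi s))"
    unfolding M_def[symmetric]
    by (rule cSUP_upper[OF t]) (rule bdd_aboveI2[where M=B2], erule M(2))
  have SM2: "(M t)^2 \<le> (SUP s\<in>{0..1}. (supn (d2 phi s))^2)"
    unfolding M_def[symmetric]
    by (rule cSUP_upper[OF t]) (rule bdd_aboveI2[where M="B2^2"], rule power_mono[OF M(2) M(3)])
  have SN: "N t \<le> (SUP s\<in>{0..1}. supn (\<lambda>x. deriv (\<lambda>y. d2 phi s y * d1 phi s y) x))"
  proof -
    have "(\<lambda>s. supn (\<lambda>x. deriv (\<lambda>y. d2 phi s y * d1 phi s y) x)) = N"
      by (simp add: fun_eq_iff N_def bd_fun)
    then show ?thesis
      by (simp only:) (rule cSUP_upper[OF t], rule bdd_aboveI2[where M="B3 * B1 + B2 * B2"], erule N(2))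
  qed
  have d2c: "continuous_on UNIV (d2 phi t)"
    unfolding d2_def by (rule smooth_d(2)[OF phi_smooth[OF t]])
  have bdc: "continuous_on UNIV (bd t)"
  proof -
    have "bd t = (\<lambda>x. deriv (deriv (deriv (phi t))) x * deriv (phi t) x
      + deriv (deriv (phi t)) x * deriv (deriv (phi t)) x)" using bd_eq[OF t] by (simp add: fun_eq_iff)
    then show ?thesis using smooth_d(1-3)[OF phi_smooth[OF t]]
      by (simp only:) (intro continuous_intros)
  qed
  have Xc: "continuous_on UNIV (X t)"
    using X_C1[OF t] by (intro differentiable_imp_continuous_on) (auto simp: differentiable_on_def)
  have compX: "continuous_on UNIV (\<lambda>x. h (X t x))" if "continuous_on UNIV h" for h
    by (rule continuous_on_compose2[OF that Xc]) simp
  have rtc: "continuous_on UNIV (rhot t)" by (rule rhot_cont[OF t])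
  have rtp: "\<And>y. rhot t y > 0" by (rule rhot_pos[OF t])
  have rtn: "\<And>y. rhot t y \<noteq> 0" using rtp by (metis less_irrefl)
  have rtnb: "\<forall>z\<in>UNIV. rhot t z \<noteq> 0" using rtn by simp
  have per_d2: "per (d2 phi t)" unfolding d2_def by (intro per_deriv phi_per t)
  have per_bd: "per (bd t)"
  proof -
    have "per (\<lambda>y. d2 phi t y * d1 phi t y)"
      using per_d2 per_deriv[OF phi_per[OF t]] by (simp add: per_def d1_def)
    then show ?thesis unfolding bd_fun by (rule per_deriv)
  qed
  have per_rt: "per (rhot t)" by (rule rhot_per[OF t])
  define K where "K = tint (\<lambda>z. 1 / rhot t z)"
  have Kp: "K > 0"
  proof -
    obtain x0 where x0: "\<forall>y\<in>{0..2*pi}. rhot t y \<le> rhot t x0"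
      using continuous_attains_sup[of "{0..2*pi}" "rhot t"] continuous_on_subset[OF rtc]
      by auto
    have "0 < 1 / rhot t x0" using rtp by simp
    also have "\<dots> = tint (\<lambda>z. 1 / rhot t x0)" by (simp add: tint_const)
    also have "\<dots> \<le> K" unfolding K_def
    proof (rule tint_le)
      show "(\<lambda>z. 1 / rhot t x0) integrable_on {0..2*pi}" by (rule cont_int) simp
      show "(\<lambda>z. 1 / rhot t z) integrable_on {0..2*pi}"
        by (rule cont_int) (intro continuous_intros rtc rtn rtnb)
      fix z assume "z \<in> {0..2*pi}"
      then show "1 / rhot t x0 \<le> 1 / rhot t z" using x0 rtp by (simp add: frac_le)
    qed
    finally show ?thesis .
  qed
  have Kint: "tint (\<lambda>y. c * (1 / rhot t y)) = c * K" for c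
    unfolding K_def by (rule tint_cmul)
  have R_eq: "rhohat rhot t y = (1 / K) * (1 / rhot t y)" for y
    unfolding rhohat_def K_def by simp
  have Rp: "rhohat rhot t y > 0" for y using R_eq Kp rtp by simp
  have Rc: "continuous_on UNIV (rhohat rhot t)"
  proof -
    have "rhohat rhot t = (\<lambda>y. (1 / K) * (1 / rhot t y))" using R_eq by (simp add: fun_eq_iff)
    then show ?thesis by (simp only:) (intro continuous_intros rtc rtn rtnb)
  qed
  have per_R: "per (rhohat rhot t)" using per_rt by (simp add: per_def R_eq)
  have TR: "tint (\<lambda>x. (rhohat rhot t (X t x))^2 * rho x) = 1 / K"
  proof -
    have "tint (\<lambda>x. (rhohat rhot t (X t x))^2 * rho x) = tint (\<lambda>y. (rhohat rhot t y)^2 * rhot t y)"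
      by (rule pushforward[OF t, where g="\<lambda>y. (rhohat rhot t y)^2", symmetric])
         (use Rc per_R in \<open>auto intro!: continuous_intros simp: per_def\<close>)
    also have "(\<lambda>y. (rhohat rhot t y)^2 * rhot t y) = (\<lambda>y. (1 / K^2) * (1 / rhot t y))"
      using rtn Kp by (simp add: fun_eq_iff R_eq power2_eq_square field_simps)
    also have "tint \<dots> = (1 / K^2) * K" by (rule Kint)
    also have "\<dots> = 1 / K" using Kp by (simp add: power2_eq_square)
    finally show ?thesis .
  qed
  have TR1: "tint (rhohat rhot t) = 1"
  proof -
    have "rhohat rhot t = (\<lambda>y. (1 / K) * (1 / rhot t y))" using R_eq by (simp add: fun_eq_iff)
    then have "tint (rhohat rhot t) = (1 / K) * K" by (simp only:) (rule Kint)
    then show ?thesis using Kp by simp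
  qed
  define nf where "nf = l2norm rho f"
  have "0 \<le> tint (\<lambda>x. (f x)^2 * rho x)"
    by (rule tint_nonneg[OF fi]) (simp add: less_imp_le[OF rp])
  then have nf0: "0 \<le> nf" unfolding nf_def l2norm_def by simp
  have sK: "sqrt K * sqrt (1 / K) = 1" using Kp by (simp add: real_sqrt_mult[symmetric])
  have coef: "\<bar>tint (\<lambda>y. f y * (h (X t y) / rhot t (X t y)) * rho y)\<bar> \<le> nf * L * sqrt K"
    if hc: "continuous_on UNIV h" and hp: "per h" and hL: "\<And>y. \<bar>h y\<bar> \<le> L" for h L
  proof -
    define g where "g y = h y / rhot t y" for y
    have gc: "continuous_on UNIV g" unfolding g_def by (intro continuous_intros hc rtc rtn rtnb)
    have gXc: "continuous_on UNIV (\<lambda>x. g (X t x))" by (rule compX[OF gc])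
    have L0: "0 \<le> L" using hL[of 0] by simp
    have "\<bar>tint (\<lambda>y. f y * g (X t y) * rho y)\<bar> \<le> nf * sqrt (tint (\<lambda>x. (g (X t x))^2 * rho x))"
      unfolding nf_def l2norm_def by (rule CS(2)[OF fm fi gXc rc rp])
    also have "tint (\<lambda>x. (g (X t x))^2 * rho x) = tint (\<lambda>y. (g y)^2 * rhot t y)"
      by (rule pushforward[OF t, where g="\<lambda>y. (g y)^2", symmetric])
         (use gc hp per_rt in \<open>auto intro!: continuous_intros simp: per_def g_def\<close>)
    also have "\<dots> \<le> tint (\<lambda>y. L^2 * (1 / rhot t y))"
    proof (rule tint_le)
      show "(\<lambda>y. (g y)^2 * rhot t y) integrable_on {0..2*pi}"
        by (rule cont_int) (intro continuous_intros gc rtc)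
      show "(\<lambda>y. L^2 * (1 / rhot t y)) integrable_on {0..2*pi}"
        by (rule cont_int) (intro continuous_intros rtc rtn rtnb)
      fix y
      have "(h y)^2 \<le> L^2" using power_mono[OF hL[of y] abs_ge_zero, of 2] by simp
      then have "(h y)^2 / rhot t y \<le> L^2 / rhot t y" using rtp[of y] by (simp add: divide_right_mono)
      then show "(g y)^2 * rhot t y \<le> L^2 * (1 / rhot t y)"
        using rtn[of y] by (simp add: g_def power2_eq_square)
    qed
    also have "\<dots> = L^2 * K" by (rule Kint)
    finally have "\<bar>tint (\<lambda>y. f y * g (X t y) * rho y)\<bar> \<le> nf * sqrt (L^2 * K)"
      using nf0 by (meson mult_left_mono real_sqrt_le_mono order_trans)
    also have "sqrt (L^2 * K) = L * sqrt K" using L0 by (simp add: real_sqrt_mult)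
    finally show ?thesis unfolding g_def by (simp add: mult.assoc)
  qed
  define c where "c = tint (\<lambda>y. f y * acoef phi X rhot t y * rho y)"
  define e where "e = tint (\<lambda>y. f y * bcoef phi X rhot t y * rho y)"
  define D where "D = tint (\<lambda>y. d2 phi t y * rhohat rhot t y)"
  have c_bd: "\<bar>c\<bar> \<le> nf * M t * sqrt K"
    unfolding c_def acoef_def by (rule coef[OF d2c per_d2 M(1)[OF t]])
  have e_bd: "\<bar>e\<bar> \<le> nf * N t * sqrt K"
  proof -
    have "e = tint (\<lambda>y. f y * (bd t (X t y) / rhot t (X t y)) * rho y)"
      by (simp add: e_def bcoef_def bd_def)
    then show ?thesis using coef[OF bdc per_bd N(1)[OF t]] by simp
  qed
  have D_bd: "\<bar>D\<bar> \<le> M t"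
  proof -
    have i1: "(\<lambda>y. d2 phi t y * rhohat rhot t y) integrable_on {0..2*pi}"
      by (rule cont_int) (intro continuous_intros d2c Rc)
    have i2: "(\<lambda>y. M t * rhohat rhot t y) integrable_on {0..2*pi}"
      by (rule cont_int) (intro continuous_intros Rc)
    have i3: "(\<lambda>y. (- M t) * rhohat rhot t y) integrable_on {0..2*pi}"
      by (rule cont_int) (intro continuous_intros Rc)
    have "D \<le> tint (\<lambda>y. M t * rhohat rhot t y)" unfolding D_def
    proof (rule tint_le[OF i1 i2])
      fix y show "d2 phi t y * rhohat rhot t y \<le> M t * rhohat rhot t y"
        using M(1)[OF t, of y] Rp[of y] by (intro mult_right_mono) auto
    qed
    also have "\<dots> = M t" using TR1 by (simp add: tint_cmul)
    finally have 1: "D \<le> M t" .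
    have "tint (\<lambda>y. (- M t) * rhohat rhot t y) \<le> D" unfolding D_def
    proof (rule tint_le[OF i3 i1])
      fix y show "(- M t) * rhohat rhot t y \<le> d2 phi t y * rhohat rhot t y"
        using M(1)[OF t, of y] Rp[of y] by (intro mult_right_mono) auto
    qed
    moreover have "tint (\<lambda>y. (- M t) * rhohat rhot t y) = - M t" by (subst tint_cmul) (simp add: TR1)
    ultimately show ?thesis using 1 by simp
  qed
  have RXc: "continuous_on UNIV (\<lambda>x. rhohat rhot t (X t x))" by (rule compX[OF Rc])
  have d2Xc: "continuous_on UNIV (\<lambda>x. d2 phi t (X t x))" by (rule compX[OF d2c])
  have sqK: "0 < sqrt K" using Kp by simp
  have Lam_eq: "Lam phi X rho rhot t f = (\<lambda>x. - c * rhohat rhot t (X t x))"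
    by (simp add: fun_eq_iff Lam_def c_def)
  have "l2norm rho (Lam phi X rho rhot t f) \<le> \<bar>c\<bar> * sqrt (1 / K)"
    unfolding Lam_eq TR[symmetric]
  proof (rule l2_bound[OF _ RXc rc rp])
    show "continuous_on UNIV (\<lambda>x. - c * rhohat rhot t (X t x))" by (intro continuous_intros RXc)
    fix x show "\<bar>- c * rhohat rhot t (X t x)\<bar> \<le> \<bar>c\<bar> * rhohat rhot t (X t x)"
      using Rp[of "X t x"] by (simp add: abs_mult)
  qed simp
  also have "\<dots> \<le> nf * M t * sqrt K * sqrt (1 / K)"
    by (rule mult_right_mono[OF c_bd]) (simp add: less_imp_le[OF Kp])
  also have "\<dots> = nf * M t" using sK by (simp add: mult.assoc)
  also have "\<dots> \<le> (SUP s\<in>{0..1}. supn (d2 phi s)) * nf"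
    using mult_left_mono[OF SM nf0] by (simp add: mult.commute)
  finally show "l2norm rho (Lam phi X rho rhot t f) \<le> (SUP s\<in>{0..1}. supn (d2 phi s)) * l2norm rho f"
    unfolding nf_def[symmetric] .
  define Q where "Q = 1/2 * \<bar>c\<bar> * M t + 1/2 * \<bar>e\<bar> + 3/2 * \<bar>c\<bar> * \<bar>D\<bar>"
  have Q0: "0 \<le> Q" unfolding Q_def using M(3)[OF t] by simp
  have Th_eq: "Theta phi X rho rhot t f = (\<lambda>x. rhohat rhot t (X t x) *
      (- 1/2 * c * d2 phi t (X t x) - 1/2 * e + 3/2 * c * D))"
    by (simp add: fun_eq_iff Theta_def c_def e_def D_def algebra_simps)
  have "l2norm rho (Theta phi X rho rhot t f) \<le> Q * sqrt (1 / K)"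
    unfolding Th_eq TR[symmetric]
  proof (rule l2_bound[OF _ RXc rc rp Q0])
    show "continuous_on UNIV (\<lambda>x. rhohat rhot t (X t x) *
      (- 1/2 * c * d2 phi t (X t x) - 1/2 * e + 3/2 * c * D))"
      by (intro continuous_intros RXc d2Xc)
    fix x
    define r where "r = rhohat rhot t (X t x)"
    define dd where "dd = d2 phi t (X t x)"
    have r0: "0 < r" unfolding r_def by (rule Rp)
    have ddM: "\<bar>dd\<bar> \<le> M t" unfolding dd_def by (rule M(1)[OF t])
    have cdd: "\<bar>c\<bar> * \<bar>dd\<bar> \<le> \<bar>c\<bar> * M t" by (rule mult_left_mono[OF ddM]) simp
    have tri: "\<And>a b c::real. \<bar>a - b + c\<bar> \<le> \<bar>a\<bar> + \<bar>b\<bar> + \<bar>c\<bar>" by arith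
    have "\<bar>- 1/2 * c * dd - 1/2 * e + 3/2 * c * D\<bar> \<le> \<bar>- 1/2 * c * dd\<bar> + \<bar>1/2 * e\<bar> + \<bar>3/2 * c * D\<bar>"
      by (rule tri)
    also have "\<dots> = 1/2 * (\<bar>c\<bar> * \<bar>dd\<bar>) + 1/2 * \<bar>e\<bar> + 3/2 * \<bar>c\<bar> * \<bar>D\<bar>"
      by (simp add: abs_mult)
    also have "\<dots> \<le> Q" unfolding Q_def using cdd by linarith
    finally have w: "\<bar>- 1/2 * c * dd - 1/2 * e + 3/2 * c * D\<bar> \<le> Q" .
    have "\<bar>r * (- 1/2 * c * dd - 1/2 * e + 3/2 * c * D)\<bar> \<le> r * Q"
      using r0 w by (simp add: abs_mult mult_left_mono)
    then show "\<bar>r * (- 1/2 * c * dd - 1/2 * e + 3/2 * c * D)\<bar> \<le> Q * r" by (simp add: mult.commute)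
  qed
  also have "\<dots> \<le> (nf * sqrt K * (2 * (M t)^2 + 1/2 * N t)) * sqrt (1 / K)"
  proof (rule mult_right_mono)
    have a: "1/2 * \<bar>c\<bar> * M t \<le> 1/2 * (nf * M t * sqrt K) * M t"
      using mult_right_mono[OF c_bd M(3)[OF t]] by simp
    have b: "1/2 * \<bar>e\<bar> \<le> 1/2 * (nf * N t * sqrt K)" using e_bd by simp
    have cc: "3/2 * \<bar>c\<bar> * \<bar>D\<bar> \<le> 3/2 * (nf * M t * sqrt K) * M t"
    proof -
      have m: "\<bar>c\<bar> * \<bar>D\<bar> \<le> nf * M t * sqrt K * M t"
        using mult_mono[OF c_bd D_bd] nf0 M(3)[OF t] sqK by simp
      show ?thesis using mult_left_mono[OF m, of "3/2"] by (simp only: mult.assoc)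
    qed
    have "Q \<le> 1/2 * (nf * M t * sqrt K) * M t + 1/2 * (nf * N t * sqrt K) + 3/2 * (nf * M t * sqrt K) * M t"
      unfolding Q_def using a b cc by linarith
    also have "\<dots> = nf * sqrt K * (2 * (M t)^2 + 1/2 * N t)" by (simp add: power2_eq_square algebra_simps)
    finally show "Q \<le> nf * sqrt K * (2 * (M t)^2 + 1/2 * N t)" .
  qed (simp add: less_imp_le[OF Kp])
  also have "\<dots> = nf * (2 * (M t)^2 + 1/2 * N t)" using sK by (simp add: algebra_simps)
  also have "\<dots> \<le> nf * (2 * (SUP s\<in>{0..1}. (supn (d2 phi s))^2)
            + (SUP s\<in>{0..1}. supn (\<lambda>x. deriv (\<lambda>y. d2 phi s y * d1 phi s y) x)))"
    using SM2 SN N(3)[OF t] by (intro mult_left_mono nf0) linarith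
  finally show "l2norm rho (Theta phi X rho rhot t f)
        \<le> (2 * (SUP s\<in>{0..1}. (supn (d2 phi s))^2)
            + (SUP s\<in>{0..1}. supn (\<lambda>x. deriv (\<lambda>y. d2 phi s y * d1 phi s y) x)))
          * l2norm rho f" unfolding nf_def[symmetric] by (simp add: mult.commute)
qed

end
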